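(* Let $k\ge 2$ be an integer, $\varepsilon=\exp(2\pi i/k)$, and let $P$ be the complex activation function of order $k$ described in the context. Let $T\subset\mathbb{BC}^n$ be bounded, i.e. $T=T_1\mathbf e_1+T_2\mathbf e_2$ with $T_1,T_2\subset\mathbb C^n$ bounded. Let $f:T\to\mathbb{BC}$ be a $\mathbb{BC}$-threshold function having $(\mathsf w_0,0,\dots,0)\in\mathbb{BC}^{n+1}$ as a weighting vector. Then there exist $\mathsf w_0'\in\mathbb{BC}$ and $\delta>0$ such that $(\mathsf w_0',\mathsf w_1,\dots,\mathsf w_n)$ is a weighting vector of $f$ for every $\mathsf w_1,\dots,\mathsf w_n\in\mathbb{BC}$ satisfying, for each $\ell=1,\dots,n$, writing $\mathsf w_\ell=w_{\ell_1}\mathbf e_1+w_{\ell_2}\mathbf e_2$: $|w_{\ell_1}|<\delta$ and $|w_{\ell_2}|<\delta$ (equivalently, $\mathsf w_\ell$ has hyperbolic modulus bounded by $\delta\mathbf e_1+\delta\mathbf e_2$).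
   Context: Bicomplex numbers: $\mathbb{BC}=\{z_1+\mathbf j z_2: z_1,z_2\in\mathbb C\}$ where $\mathbb C=\mathbb C(\mathbf i)$, $\mathbf i,\mathbf j$ are commuting units with $\mathbf i^2=\mathbf j^2=-1$. Put $\mathbf e_1=\frac{1+\mathbf i\mathbf j}{2}$, $\mathbf e_2=\frac{1-\mathbf i\mathbf j}{2}$; then $\mathbf e_1^2=\mathbf e_1$, $\mathbf e_2^2=\mathbf e_2$, $\mathbf e_1\mathbf e_2=0$, $\mathbf e_1+\mathbf e_2=1$, and every $Z=z_1+\mathbf jz_2$ is uniquely $Z=\lambda_1\mathbf e_1+\lambda_2\mathbf e_2$ with $\lambda_1=z_1-\mathbf iz_2$, $\lambda_2=z_1+\mathbf iz_2\in\mathbb C$; addition and multiplication are componentwise in this representation. Vectors in $\mathbb{BC}^n$ are likewise written $X_1\mathbf e_1+X_2\mathbf e_2$ with $X_1,X_2\in\mathbb C^n$. Complex activation function: for $z\in\mathbb C\setminus\{0\}$ with argument $\arg z\in[0,2\pi)$, $P(z)=\varepsilon^{l}$ whenever $\frac{2\pi l}{k}\le \arg z<\frac{2\pi(l+1)}{k}$, $l\in\{0,\dots,k-1\}$. Bicomplex activation function: for $\mathsf w_0=w_{0_1}\mathbf e_1+w_{0_2}\mathbf e_2$, $\mathsf w_\ell=w_{\ell_1}\mathbf e_1+w_{\ell_2}\mathbf e_2$, $\mathsf x_\ell=x_{\ell_1}\mathbf e_1+x_{\ell_2}\mathbf e_2$ ($\ell=1,\dots,n$), $\mathcal P(\mathsf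 w_0+\sum_{\ell=1}^n\mathsf w_\ell\mathsf x_\ell):=P(w_{0_1}+\sum_\ell w_{\ell_1}x_{\ell_1})\mathbf e_1+P(w_{0_2}+\sum_\ell w_{\ell_2}x_{\ell_2})\mathbf e_2$. A function $f:T\to\mathbb{BC}$ ($T\subset\mathbb{BC}^n$) is a $\mathbb{BC}$-threshold function if there is a weighting vector $\mathsf W=(\mathsf w_0,\dots,\mathsf w_n)\in\mathbb{BC}^{n+1}$ with $f(\mathsf x_1,\dots,\mathsf x_n)=\mathcal P(\mathsf w_0+\sum_{\ell=1}^n\mathsf w_\ell\mathsf x_\ell)$ for all $(\mathsf x_1,\dots,\mathsf x_n)\in T$. *)

theory Defs
  imports "HOL-Analysis.Analysis"
begin

text \<open>Bicomplex numbers are represented by their idempotent components: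
  a bicomplex number Z = l1 e1 + l2 e2 is the pair (l1, l2) of complex numbers;
  addition and multiplication are componentwise. A vector in BC^n is a pair
  (X1, X2) of vectors in C^n, where the index set is a finite type 'n.\<close>

type_synonym bicomplex = "complex \<times> complex"

definition arg0 :: "complex \<Rightarrow> real" where
  "arg0 z = (if Arg z < 0 then Arg z + 2 * pi else Arg z)"

text \<open>Complex activation function of order k (meaningful for z nonzero):
  P z = eps^l where 2 pi l / k <= arg z < 2 pi (l+1)/k, eps = exp(2 pi i / k).\<close>
definition cact :: "nat \<Rightarrow> complex \<Rightarrow> complex" where
  "cact k z = (exp (2 * pi * \<i> / of_nat k)) ^ nat \<lfloor>arg0 z * real k / (2 * pi)\<rfloor>"

definition wsum1 :: "bicomplex \<Rightarrow> ('n::finite \<Rightarrow> bicomplex) \<Rightarrow> (complex^'n) \<times> (complex^'n) \<Rightarrow> complex" where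
  "wsum1 w0 w x = fst w0 + (\<Sum>l\<in>UNIV. fst (w l) * (fst x $ l))"

definition wsum2 :: "bicomplex \<Rightarrow> ('n::finite \<Rightarrow> bicomplex) \<Rightarrow> (complex^'n) \<times> (complex^'n) \<Rightarrow> complex" where
  "wsum2 w0 w x = snd w0 + (\<Sum>l\<in>UNIV. snd (w l) * (snd x $ l))"

text \<open>(w0, w_1, ..., w_n) is a weighting vector of f on T: the bicomplex activation
  is defined (both components of the weighted sum are nonzero, since P is only
  defined on C \ {0}) and equals f x, for every x in T.\<close>
definition is_weighting_vector ::
  "nat \<Rightarrow> ((complex^'n) \<times> (complex^'n)) set \<Rightarrow> ((complex^'n) \<times> (complex^'n) \<Rightarrow> bicomplex)
     \<Rightarrow> bicomplex \<Rightarrow> ('n::finite \<Rightarrow> bicomplex) \<Rightarrow> bool" where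
  "is_weighting_vector k T f w0 w \<longleftrightarrow>
     (\<forall>x\<in>T. wsum1 w0 w x \<noteq> 0 \<and> wsum2 w0 w x \<noteq> 0 \<and>
        f x = (cact k (wsum1 w0 w x), cact k (wsum2 w0 w x)))"

end

theory Submission
  imports Defs
begin

lemma arg0_exp:
  assumes "0 \<le> t" "t < 2*pi" "r > 0"
  shows "arg0 (of_real r * exp (\<i> * of_real t)) = t"
proof (cases "t \<le> pi")
  case True
  then have "Arg (of_real r * exp (\<i> * of_real t)) = t"
    using assms by (intro Arg_unique) auto
  then show ?thesis using assms by (simp add: arg0_def)
next
  case False
  have e: "exp (\<i> * (of_real t - 2 * of_real pi)) = exp (\<i> * of_real t)"
  proof -
    have "\<i> * (of_real t - 2 * of_real pi) = \<i> * of_real t - 2 * of_real pi * \<i>"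
      by (simp add: algebra_simps)
    then show ?thesis by (simp only: exp_diff exp_two_pi_i) simp
  qed
  have "Arg (of_real r * exp (\<i> * of_real t)) = t - 2*pi"
    using assms False by (intro Arg_unique) (auto simp: e)
  then show ?thesis using assms False by (simp add: arg0_def)
qed

lemma Arg_small:
  assumes "e > 0"
  shows "\<exists>\<eta>>0. \<eta> \<le> 1 \<and> (\<forall>u. norm (u - 1) < \<eta> \<longrightarrow> \<bar>Arg u\<bar> < e)"
proof -
  have "continuous (at 1) Arg"
    by (rule continuous_at_Arg) (auto simp: nonpos_Reals_def)
  then obtain d where d: "d > 0" "\<And>u. dist u 1 < d \<Longrightarrow> dist (Arg u) (Arg 1) < e"
    using assms unfolding continuous_at_eps_delta by blast
  show ?thesis
    by (rule exI[of _ "min d 1"]) (use d in \<open>auto simp: dist_norm\<close>)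
qed

lemma sector:
  assumes "z0 \<noteq> 0" "k \<ge> 1"
  shows "\<exists>c \<eta>. \<eta> > 0 \<and> (\<forall>d. norm d < \<eta> \<longrightarrow> c + d \<noteq> 0 \<and> cact k (c + d) = cact k z0)"
proof -
  define l where "l = nat \<lfloor>arg0 z0 * real k / (2 * pi)\<rfloor>"
  have kpos: "real k > 0" using assms by simp
  have a0: "0 \<le> arg0 z0" "arg0 z0 < 2*pi"
    unfolding arg0_def using mpi_less_Arg[of z0] Arg_le_pi[of z0] by auto
  have fl0: "\<lfloor>arg0 z0 * real k / (2 * pi)\<rfloor> \<ge> 0" using a0 kpos by simp
  have "arg0 z0 * real k / (2 * pi) < real k" using a0 kpos by (simp add: field_simps)
  then have "\<lfloor>arg0 z0 * real k / (2 * pi)\<rfloor> < int k" by linarith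
  then have lk: "l < k" using fl0 unfolding l_def by linarith
  define \<theta> where "\<theta> = (2 * real l + 1) * pi / real k"
  define c where "c = exp (\<i> * of_real \<theta>)"
  obtain \<eta> where eta: "\<eta> > 0" "\<eta> \<le> 1" "\<And>u. norm (u - 1) < \<eta> \<Longrightarrow> \<bar>Arg u\<bar> < pi / real k"
    using Arg_small[of "pi / real k"] kpos by auto
  have "\<forall>d. norm d < \<eta> \<longrightarrow> c + d \<noteq> 0 \<and> cact k (c + d) = cact k z0"
  proof (intro allI impI)
    fix d :: complex assume d: "norm d < \<eta>"
    define u where "u = 1 + d * exp (- (\<i> * of_real \<theta>))"
    have nu: "norm (u - 1) = norm d" unfolding u_def by (simp add: norm_mult)
    have u0: "u \<noteq> 0" using nu d eta(2) by auto
    have cu: "c + d = c * u"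
      unfolding u_def c_def by (simp add: algebra_simps exp_minus)
    have au: "\<bar>Arg u\<bar> < pi / real k" using eta(3) nu d by simp
    define t where "t = \<theta> + Arg u"
    have cd: "c + d = of_real (norm u) * exp (\<i> * of_real t)"
    proof -
      have "c + d = c * (of_real (norm u) * exp (\<i> * of_real (Arg u)))"
        using cu Arg_eq[OF u0] by metis
      also have "\<dots> = of_real (norm u) * exp (\<i> * of_real t)"
        unfolding c_def t_def by (simp add: distrib_left exp_add mult_ac)
      finally show ?thesis .
    qed
    have au1: "- (pi / real k) < Arg u" "Arg u < pi / real k" using au by auto
    have e1: "\<theta> - pi / real k = 2 * real l * pi / real k" "\<theta> + pi / real k = 2 * (real l + 1) * pi / real k"
      using kpos unfolding \<theta>_def by (simp_all add: field_simps)
    have lo: "t > 2 * real l * pi / real k" using au1 e1 unfolding t_def by linarith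
    have hi: "t < 2 * (real l + 1) * pi / real k" using au1 e1 unfolding t_def by linarith
    have "real l + 1 \<le> real k" using lk by simp
    then have "2 * (real l + 1) * pi \<le> 2 * pi * real k" by (simp add: mult_right_mono)
    then have "2 * (real l + 1) * pi / real k \<le> 2 * pi"
      using kpos by (simp add: divide_le_eq)
    moreover have "2 * real l * pi / real k \<ge> 0" using kpos by simp
    ultimately have t: "0 \<le> t" "t < 2*pi" using lo hi by linarith+
    have nun: "norm u > 0" using u0 by simp
    have ar: "arg0 (c + d) = t" unfolding cd by (rule arg0_exp[OF t nun])
    have "t * real k / (2*pi) > real l" using lo kpos by (simp add: field_simps)
    moreover have "t * real k / (2*pi) < real l + 1" using hi kpos by (simp add: field_simps)
    ultimately have "\<lfloor>t * real k / (2*pi)\<rfloor> = int l" by linarith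
    then have "nat \<lfloor>arg0 (c + d) * real k / (2*pi)\<rfloor> = l" using ar by simp
    then show "c + d \<noteq> 0 \<and> cact k (c + d) = cact k z0"
      using cu u0 unfolding cact_def l_def c_def by simp
  qed
  then show ?thesis using eta(1) by blast
qed

lemma bound_sum:
  fixes a :: "'n::finite \<Rightarrow> complex" and v :: "complex^'n"
  assumes "\<forall>l. norm (a l) < \<delta>" "norm v \<le> B" "B > 0"
  shows "norm (\<Sum>l\<in>UNIV. a l * v $ l) < real CARD('n) * \<delta> * B"
proof -
  have "norm (\<Sum>l\<in>UNIV. a l * v $ l) \<le> (\<Sum>l\<in>UNIV. norm (a l) * norm (v $ l))"
    by (rule order_trans[OF norm_sum]) (simp only: norm_mult order_refl)
  also have "\<dots> < (\<Sum>l\<in>(UNIV::'n set). \<delta> * B)"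
  proof (rule sum_strict_mono)
    fix l :: 'n
    have "norm (a l) * norm (v $ l) \<le> norm (a l) * B"
      by (rule mult_left_mono[OF order_trans[OF Finite_Cartesian_Product.norm_nth_le[of v l] assms(2)] norm_ge_zero])
    also have "\<dots> < \<delta> * B" using assms(1,3) by simp
    finally show "norm (a l) * norm (v $ l) < \<delta> * B" .
  qed simp_all
  also have "\<dots> = real CARD('n) * \<delta> * B" by simp
  finally show ?thesis .
qed

theorem mainTheorem1:
  fixes k :: nat
    and T :: "((complex^'n::finite) \<times> (complex^'n)) set"
    and f :: "(complex^'n) \<times> (complex^'n) \<Rightarrow> bicomplex"
    and w0 :: bicomplex
  assumes "k \<ge> 2"
    and "bounded (fst ` T)" and "bounded (snd ` T)"
    and "is_weighting_vector k T f w0 (\<lambda>_. (0, 0))"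
  shows "\<exists>w0' :: bicomplex. \<exists>\<delta>::real. \<delta> > 0 \<and>
           (\<forall>w :: 'n \<Rightarrow> bicomplex.
              (\<forall>l. norm (fst (w l)) < \<delta> \<and> norm (snd (w l)) < \<delta>) \<longrightarrow>
              is_weighting_vector k T f w0' w)"
proof (cases "T = {}")
  case True
  then show ?thesis unfolding is_weighting_vector_def by (intro exI[of _ w0] exI[of _ 1]) auto
next
  case False
  then obtain x0 where x0: "x0 \<in> T" by blast
  have W: "\<forall>x\<in>T. fst w0 \<noteq> 0 \<and> snd w0 \<noteq> 0 \<and> f x = (cact k (fst w0), cact k (snd w0))"
    using assms(4) unfolding is_weighting_vector_def wsum1_def wsum2_def by simp
  then have nz: "fst w0 \<noteq> 0" "snd w0 \<noteq> 0" using x0 by auto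
  have k1: "k \<ge> 1" using assms(1) by simp
  obtain c1 \<eta>1 where s1: "\<eta>1 > 0" "\<And>d. norm d < \<eta>1 \<Longrightarrow> c1 + d \<noteq> 0 \<and> cact k (c1 + d) = cact k (fst w0)"
    using sector[OF nz(1) k1] by blast
  obtain c2 \<eta>2 where s2: "\<eta>2 > 0" "\<And>d. norm d < \<eta>2 \<Longrightarrow> c2 + d \<noteq> 0 \<and> cact k (c2 + d) = cact k (snd w0)"
    using sector[OF nz(2) k1] by blast
  obtain B1 where B1: "B1 > 0" "\<And>x. x \<in> fst ` T \<Longrightarrow> norm x \<le> B1"
    using assms(2) unfolding bounded_pos by blast
  obtain B2 where B2: "B2 > 0" "\<And>x. x \<in> snd ` T \<Longrightarrow> norm x \<le> B2"
    using assms(3) unfolding bounded_pos by blast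
  define B where "B = max B1 B2"
  have Bpos: "B > 0" using B1 unfolding B_def by simp
  define \<eta> where "\<eta> = min \<eta>1 \<eta>2"
  have etapos: "\<eta> > 0" using s1 s2 unfolding \<eta>_def by simp
  define \<delta> where "\<delta> = \<eta> / (real CARD('n) * B)"
  have cpos: "real CARD('n) > 0" by simp
  have dpos: "\<delta> > 0" unfolding \<delta>_def using etapos Bpos cpos by simp
  have cdb: "real CARD('n) * \<delta> * B = \<eta>" unfolding \<delta>_def using Bpos cpos by simp
  show ?thesis
  proof (intro exI[of _ "(c1, c2)"] exI[of _ \<delta>] conjI allI impI dpos)
    fix w :: "'n \<Rightarrow> bicomplex"
    assume w: "\<forall>l. norm (fst (w l)) < \<delta> \<and> norm (snd (w l)) < \<delta>"
    show "is_weighting_vector k T f (c1, c2) w"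
      unfolding is_weighting_vector_def
    proof
      fix x assume x: "x \<in> T"
      have "norm (fst x) \<le> B1" using B1(2)[OF imageI[OF x]] by simp
      then have n1: "norm (fst x) \<le> B" unfolding B_def by (simp add: le_max_iff_disj)
      have "norm (snd x) \<le> B2" using B2(2)[OF imageI[OF x]] by simp
      then have n2: "norm (snd x) \<le> B" unfolding B_def by (simp add: le_max_iff_disj)
      have w1: "\<forall>l. norm (fst (w l)) < \<delta>" "\<forall>l. norm (snd (w l)) < \<delta>" using w by auto
      have "norm (\<Sum>l\<in>UNIV. fst (w l) * fst x $ l) < real CARD('n) * \<delta> * B"
        by (rule bound_sum[OF w1(1) n1 Bpos])
      then have d1: "norm (\<Sum>l\<in>UNIV. fst (w l) * fst x $ l) < \<eta>1"
        unfolding cdb \<eta>_def by linarith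
      have "norm (\<Sum>l\<in>UNIV. snd (w l) * snd x $ l) < real CARD('n) * \<delta> * B"
        by (rule bound_sum[OF w1(2) n2 Bpos])
      then have d2: "norm (\<Sum>l\<in>UNIV. snd (w l) * snd x $ l) < \<eta>2"
        unfolding cdb \<eta>_def by linarith
      show "wsum1 (c1, c2) w x \<noteq> 0 \<and> wsum2 (c1, c2) w x \<noteq> 0 \<and>
          f x = (cact k (wsum1 (c1, c2) w x), cact k (wsum2 (c1, c2) w x))"
        using s1(2)[OF d1] s2(2)[OF d2] W x unfolding wsum1_def wsum2_def by simp
    qed
  qed
qed

end
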